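(* Let $d\geq 1$, $1\leq a\leq d+1$, and $0<m_1<m_2\leq 2d+2$ be integers. If $m_1\geq a$ and $m_2\geq a+d+1$ with $(m_1,m_2)\neq(a,a+d+1)$, then $$\lim_{n\to\infty}\left(h_d^{(a)}(n)-\ell_{2d+2}^{(m_1,m_2)}(n)\right)=+\infty;$$ if $m_1\leq a$ and $m_2\leq a+d+1$ with $(m_1,m_2)\neq(a,a+d+1)$, then this limit is $-\infty$; and if $(m_1,m_2)=(a,a+d+1)$ then $h_d^{(a)}(n)=\ell_{2d+2}^{(m_1,m_2)}(n)$ for all $n$.
   Context: A partition is a finite nonincreasing sequence of positive integers (its parts); its size is not fixed. The perimeter of a partition with largest part $\alpha$ and $\lambda$ parts is $\alpha+\lambda-1$. A partition has $d$-distinct parts if any two of its parts differ by at least $d$. $h_d^{(a)}(n)$ is the number of partitions of perimeter $n$ whose parts are $d$-distinct and all $\geq a$. For $0<m_1<m_2\le m$, $\ell_m^{(m_1,m_2)}(n)$ is the number of partitions of perimeter $n$ all of whose parts are congruent to $m_1$ or $m_2$ modulo $m$. *)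

theory Defs
  imports Complex_Main
begin

text \<open>A partition is a nonempty finite nonincreasing list of positive integers
(nonempty so that the largest part, hence the perimeter, is defined).\<close>
definition is_partition :: "nat list \<Rightarrow> bool" where
  "is_partition xs \<longleftrightarrow> xs \<noteq> [] \<and> sorted_wrt (\<ge>) xs \<and> (\<forall>x\<in>set xs. 0 < x)"

definition perimeter :: "nat list \<Rightarrow> nat" where
  "perimeter xs = hd xs + length xs - 1"

definition d_distinct :: "nat \<Rightarrow> nat list \<Rightarrow> bool" where
  "d_distinct d xs \<longleftrightarrow> (\<forall>i j. i < j \<and> j < length xs \<longrightarrow> xs ! j + d \<le> xs ! i)"

definition h_count :: "nat \<Rightarrow> nat \<Rightarrow> nat \<Rightarrow> nat" where
  "h_count d a n = card {xs. is_partition xs \<and> perimeter xs = n \<and> d_distinct d xs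
                              \<and> (\<forall>x\<in>set xs. a \<le> x)}"

definition l_count :: "nat \<Rightarrow> nat \<Rightarrow> nat \<Rightarrow> nat \<Rightarrow> nat" where
  "l_count m m1 m2 n = card {xs. is_partition xs \<and> perimeter xs = n
                              \<and> (\<forall>x\<in>set xs. x mod m = m1 mod m \<or> x mod m = m2 mod m)}"

end

theory Submission
  imports Defs
begin


definition NI :: "nat \<Rightarrow> nat \<Rightarrow> nat \<Rightarrow> nat list set" where
  "NI lo c k = {xs. length xs = k \<and> sorted_wrt (\<ge>) xs \<and> (\<forall>x\<in>set xs. lo \<le> x \<and> x \<le> lo + c)}"

lemma NI_finite: "finite (NI lo c k)"
proof -
  have "NI lo c k \<subseteq> {xs. set xs \<subseteq> {..lo+c} \<and> length xs = k}"
    unfolding NI_def by auto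
  moreover have "finite {xs. set xs \<subseteq> {..lo+c} \<and> length xs = k}"
    by (rule finite_lists_length_eq) simp
  ultimately show ?thesis by (rule finite_subset)
qed

lemma hockey: "(\<Sum>i\<le>c. (i + k) choose k) = (c + Suc k) choose Suc k"
proof (induction c)
  case 0 then show ?case by simp
next
  case (Suc c)
  have "(\<Sum>i\<le>Suc c. (i + k) choose k) = ((c + Suc k) choose Suc k) + ((Suc c + k) choose k)"
    using Suc by (simp del: binomial_Suc_Suc)
  also have "\<dots> = Suc (Suc c + k) choose Suc k"
    using binomial_Suc_Suc[of "Suc c + k" k] by (simp del: binomial_Suc_Suc)
  finally show ?case by simp
qed

lemma NI_Suc: "NI lo c (Suc k) = (\<Union>i\<in>{..c}. (Cons (lo+i)) ` NI lo i k)"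
proof (intro set_eqI iffI)
  fix xs assume "xs \<in> NI lo c (Suc k)"
  then obtain x ys where xs: "xs = x # ys" and "length ys = k" and s: "sorted_wrt (\<ge>) (x#ys)"
    and b: "\<forall>y\<in>set (x#ys). lo \<le> y \<and> y \<le> lo + c"
    unfolding NI_def by (cases xs) auto
  then have "ys \<in> NI lo (x - lo) k" unfolding NI_def by auto
  moreover have "x - lo \<in> {..c}" using b by auto
  moreover have "x = lo + (x - lo)" using b by auto
  ultimately show "xs \<in> (\<Union>i\<in>{..c}. (Cons (lo+i)) ` NI lo i k)" using xs by blast
next
  fix xs assume "xs \<in> (\<Union>i\<in>{..c}. (Cons (lo+i)) ` NI lo i k)"
  then obtain i ys where "i \<le> c" "ys \<in> NI lo i k" "xs = (lo + i) # ys" by auto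
  then show "xs \<in> NI lo c (Suc k)" unfolding NI_def by auto
qed

lemma card_NI: "card (NI lo c k) = (c + k) choose k"
proof (induction k arbitrary: c)
  case 0
  have "NI lo c 0 = {[]}" unfolding NI_def by auto
  then show ?case by simp
next
  case (Suc k)
  have "card (NI lo c (Suc k)) = (\<Sum>i\<in>{..c}. card ((Cons (lo+i)) ` NI lo i k))"
    unfolding NI_Suc
    by (rule card_UN_disjoint) (auto simp: NI_finite)
  also have "\<dots> = (\<Sum>i\<le>c. (i + k) choose k)"
    by (simp add: card_image Suc)
  also have "\<dots> = (c + Suc k) choose Suc k" by (rule hockey)
  finally show ?case .
qed




definition CntF :: "(nat \<Rightarrow> nat) \<Rightarrow> nat \<Rightarrow> nat" where
  "CntF f n = (\<Sum>j<n. if f j \<le> n then (n - f j + j) choose j else 0)"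

definition Iset :: "(nat \<Rightarrow> nat) \<Rightarrow> nat \<Rightarrow> nat list set" where
  "Iset f n = {ys. ys \<noteq> [] \<and> sorted_wrt (\<ge>) ys \<and> f (hd ys) + length ys - 1 = n}"

lemma sm_ge: fixes f :: "nat \<Rightarrow> nat" and j :: nat assumes "strict_mono f" "1 \<le> f 0" shows "j + 1 \<le> f j"
proof (induction j)
  case 0 then show ?case using assms by simp
next
  case (Suc j)
  have "f j < f (Suc j)" using assms(1) by (simp add: strict_monoD)
  then show ?case using Suc by simp
qed

lemma CntF_alt: "CntF f n = (\<Sum>j\<in>{j\<in>{..<n}. f j \<le> n}. (n - f j + j) choose j)"
  unfolding CntF_def by (subst sum.inter_filter) auto

lemma choose_swap: "(a + b) choose b = (a + b) choose (a::nat)"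
  using binomial_symmetric[of b "a+b"] by simp

lemma Iset_eq: assumes "strict_mono f" "1 \<le> f 0"
  shows "Iset f n = (\<Union>j\<in>{j\<in>{..<n}. f j \<le> n}. Cons j ` NI 0 j (n - f j))"
proof (intro set_eqI iffI)
  fix ys assume "ys \<in> Iset f n"
  then obtain j r where ys: "ys = j # r" and s: "sorted_wrt (\<ge>) (j # r)"
    and p: "f j + length r = n" unfolding Iset_def by (cases ys) auto
  have "j + 1 \<le> f j" using sm_ge[OF assms] .
  then have "j \<in> {j\<in>{..<n}. f j \<le> n}" using p by auto
  moreover have "r \<in> NI 0 j (n - f j)" using s p unfolding NI_def by auto
  ultimately show "ys \<in> (\<Union>j\<in>{j\<in>{..<n}. f j \<le> n}. Cons j ` NI 0 j (n - f j))"
    using ys by blast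
next
  fix ys assume "ys \<in> (\<Union>j\<in>{j\<in>{..<n}. f j \<le> n}. Cons j ` NI 0 j (n - f j))"
  then obtain j r where "f j \<le> n" "r \<in> NI 0 j (n - f j)" "ys = j # r" by auto
  then show "ys \<in> Iset f n" unfolding Iset_def NI_def by auto
qed

lemma card_Iset: assumes "strict_mono f" "1 \<le> f 0"
  shows "card (Iset f n) = CntF f n"
proof -
  have "card (Iset f n) = (\<Sum>j\<in>{j\<in>{..<n}. f j \<le> n}. card (Cons j ` NI 0 j (n - f j)))"
    unfolding Iset_eq[OF assms]
    by (rule card_UN_disjoint) (auto simp: NI_finite)
  also have "\<dots> = (\<Sum>j\<in>{j\<in>{..<n}. f j \<le> n}. (n - f j + j) choose j)"
  proof (rule sum.cong)
    fix j assume "j \<in> {j\<in>{..<n}. f j \<le> n}"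
    then have "j + (n - f j) = n - f j + j" by simp
    then show "card (Cons j ` NI 0 j (n - f j)) = (n - f j + j) choose j"
      using choose_swap[of j "n - f j"] by (simp add: card_image card_NI add.commute)
  qed simp
  finally show ?thesis by (simp add: CntF_alt)
qed

definition Qset :: "nat \<Rightarrow> nat \<Rightarrow> nat \<Rightarrow> nat list set" where
  "Qset a d n = {q. q \<noteq> [] \<and> sorted_wrt (\<ge>) q \<and> (\<forall>x\<in>set q. a \<le> x) \<and> hd q + (length q - 1)*(d+1) = n}"

lemma Qset_eq: assumes "1 \<le> a"
  shows "Qset a d n = (\<Union>k\<in>{k\<in>{..<n}. a + k*(d+1) \<le> n}. Cons (n - k*(d+1)) ` NI a (n - (a + k*(d+1))) k)"
proof (intro set_eqI iffI)
  fix q assume "q \<in> Qset a d n"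
  then obtain c r where q: "q = c # r" and s: "sorted_wrt (\<ge>) (c # r)"
    and b: "\<forall>x\<in>set (c#r). a \<le> x" and p: "c + length r * (d+1) = n" unfolding Qset_def by (cases q) auto
  have "a \<le> c" using b by simp
  then have "length r \<in> {k\<in>{..<n}. a + k*(d+1) \<le> n}" using p assms by auto
  moreover have "r \<in> NI a (n - (a + length r*(d+1))) (length r)" using s p b unfolding NI_def by auto
  moreover have "c = n - length r * (d+1)" using p by simp
  ultimately show "q \<in> (\<Union>k\<in>{k\<in>{..<n}. a + k*(d+1) \<le> n}. Cons (n - k*(d+1)) ` NI a (n - (a + k*(d+1))) k)"
    using q by blast
next
  fix q assume "q \<in> (\<Union>k\<in>{k\<in>{..<n}. a + k*(d+1) \<le> n}. Cons (n - k*(d+1)) ` NI a (n - (a + k*(d+1))) k)"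
  then obtain k r where "a + k*(d+1) \<le> n" "r \<in> NI a (n - (a + k*(d+1))) k" "q = (n - k*(d+1)) # r" by auto
  then show "q \<in> Qset a d n" unfolding Qset_def NI_def by auto
qed

lemma card_Qset: assumes "1 \<le> a"
  shows "card (Qset a d n) = CntF (\<lambda>k. a + k*(d+1)) n"
proof -
  have "card (Qset a d n) = (\<Sum>k\<in>{k\<in>{..<n}. a + k*(d+1) \<le> n}. card (Cons (n - k*(d+1)) ` NI a (n - (a + k*(d+1))) k))"
    unfolding Qset_eq[OF assms]
  proof (rule card_UN_disjoint)
    show "\<forall>i\<in>{k \<in> {..<n}. a + k * (d + 1) \<le> n}. \<forall>j\<in>{k \<in> {..<n}. a + k * (d + 1) \<le> n}. i \<noteq> j \<longrightarrow>
        (#) (n - i * (d + 1)) ` NI a (n - (a + i * (d + 1))) i \<inter>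
        (#) (n - j * (d + 1)) ` NI a (n - (a + j * (d + 1))) j = {}"
    proof (intro ballI impI)
      fix i j assume i: "i \<in> {k \<in> {..<n}. a + k * (d + 1) \<le> n}" and j: "j \<in> {k \<in> {..<n}. a + k * (d + 1) \<le> n}" and "i \<noteq> j"
      then have "i * (d+1) \<noteq> j * (d+1)" using mult_right_cancel[of "d+1" i j] by linarith
      then have "n - i * (d + 1) \<noteq> n - j * (d + 1)" using i j by auto
      then show "(#) (n - i * (d + 1)) ` NI a (n - (a + i * (d + 1))) i \<inter>
        (#) (n - j * (d + 1)) ` NI a (n - (a + j * (d + 1))) j = {}" by auto
    qed
  qed (auto simp: NI_finite)
  also have "\<dots> = (\<Sum>k\<in>{k\<in>{..<n}. a + k*(d+1) \<le> n}. (n - (a + k*(d+1)) + k) choose k)"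
    by (rule sum.cong) (auto simp: card_image card_NI)
  finally show ?thesis by (simp add: CntF_alt)
qed




fun psi :: "nat \<Rightarrow> nat list \<Rightarrow> nat list" where
  "psi d [] = []"
| "psi d (x # xs) = (x + length xs * d) # psi d xs"

fun phi :: "nat \<Rightarrow> nat list \<Rightarrow> nat list" where
  "phi d [] = []"
| "phi d (x # xs) = (x - length xs * d) # phi d xs"

lemma length_psi[simp]: "length (psi d xs) = length xs" by (induction xs) auto
lemma length_phi[simp]: "length (phi d xs) = length xs" by (induction xs) auto
lemma psi_Nil_iff[simp]: "psi d xs = [] \<longleftrightarrow> xs = []" by (cases xs) auto
lemma phi_Nil_iff[simp]: "phi d xs = [] \<longleftrightarrow> xs = []" by (cases xs) auto

lemma d_distinct_Nil[simp]: "d_distinct d []" unfolding d_distinct_def by simp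

lemma d_distinct_Cons:
  "d_distinct d (x # xs) \<longleftrightarrow> (\<forall>y\<in>set xs. y + d \<le> x) \<and> d_distinct d xs"
proof
  assume H: "d_distinct d (x # xs)"
  have "\<forall>y\<in>set xs. y + d \<le> x"
  proof
    fix y assume "y \<in> set xs"
    then obtain j where "j < length xs" "xs ! j = y" by (auto simp: in_set_conv_nth)
    then show "y + d \<le> x" using H[unfolded d_distinct_def, rule_format, of 0 "Suc j"] by simp
  qed
  moreover have "d_distinct d xs" unfolding d_distinct_def
  proof (intro allI impI)
    fix i j assume "i < j \<and> j < length xs"
    then show "xs ! j + d \<le> xs ! i" using H[unfolded d_distinct_def, rule_format, of "Suc i" "Suc j"] by simp
  qed
  ultimately show "(\<forall>y\<in>set xs. y + d \<le> x) \<and> d_distinct d xs" by blast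
next
  assume H: "(\<forall>y\<in>set xs. y + d \<le> x) \<and> d_distinct d xs"
  show "d_distinct d (x # xs)" unfolding d_distinct_def
  proof (intro allI impI)
    fix i j assume ij: "i < j \<and> j < length (x # xs)"
    then obtain j' where j': "j = Suc j'" "j' < length xs" by (cases j) auto
    show "(x # xs) ! j + d \<le> (x # xs) ! i"
    proof (cases i)
      case 0 then show ?thesis using H j' by simp
    next
      case (Suc i')
      then show ?thesis using H[THEN conjunct2, unfolded d_distinct_def, rule_format, of i' j'] ij j' by simp
    qed
  qed
qed

lemma d_distinct_sorted: "d_distinct d xs \<Longrightarrow> sorted_wrt (\<ge>) xs"
  by (induction xs) (auto simp: d_distinct_Cons)

lemma psi_set: "y \<in> set (psi d xs) \<Longrightarrow> \<exists>z\<in>set xs. \<exists>t<length xs. y = z + t*d"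
proof (induction xs)
  case Nil then show ?case by simp
next
  case (Cons x xs)
  show ?case
  proof (cases "y = x + length xs * d")
    case True then show ?thesis by auto
  next
    case False
    then have "y \<in> set (psi d xs)" using Cons.prems by simp
    then obtain z t where "z \<in> set xs" "t < length xs" "y = z + t*d" using Cons.IH by blast
    then show ?thesis by (intro bexI[of _ z] exI[of _ t]) auto
  qed
qed

lemma psi_ge: "\<forall>x\<in>set q. a \<le> x \<Longrightarrow> \<forall>y\<in>set (psi d q). a \<le> y"
  using psi_set by fastforce

lemma psi_dd: "sorted_wrt (\<ge>) q \<Longrightarrow> d_distinct d (psi d q)"
proof (induction q)
  case Nil then show ?case by simp
next
  case (Cons x xs)
  have "\<forall>y\<in>set (psi d xs). y + d \<le> x + length xs * d"
  proof
    fix y assume "y \<in> set (psi d xs)"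
    then obtain z t where z: "z \<in> set xs" "t < length xs" "y = z + t*d" using psi_set by blast
    have "z \<le> x" using Cons.prems z by simp
    moreover have "(t+1)*d \<le> length xs * d" using z by (intro mult_le_mono1) simp
    ultimately show "y + d \<le> x + length xs * d" using z by simp
  qed
  then show ?case using Cons by (simp add: d_distinct_Cons)
qed

lemma phi_psi: "phi d (psi d q) = q" by (induction q) auto

lemma sorted_hd_ge: fixes u :: nat shows "sorted_wrt (\<ge>) (u # v) \<Longrightarrow> y \<in> set (u # v) \<Longrightarrow> y \<le> u"
  by auto

lemma phi_good:
  assumes "d_distinct d p" "\<forall>x\<in>set p. a \<le> x"
  shows "sorted_wrt (\<ge>) (phi d p) \<and> (\<forall>y\<in>set (phi d p). a \<le> y) \<and> (p \<noteq> [] \<longrightarrow> a + (length p - 1)*d \<le> hd p)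
         \<and> psi d (phi d p) = p"
  using assms
proof (induction p)
  case Nil then show ?case by simp
next
  case (Cons x xs)
  have dx: "\<forall>y\<in>set xs. y + d \<le> x" and dd: "d_distinct d xs" using Cons.prems by (auto simp: d_distinct_Cons)
  have IH: "sorted_wrt (\<ge>) (phi d xs) \<and> (\<forall>y\<in>set (phi d xs). a \<le> y) \<and> (xs \<noteq> [] \<longrightarrow> a + (length xs - 1)*d \<le> hd xs)
         \<and> psi d (phi d xs) = xs" using Cons dd by simp
  have ax: "a \<le> x" using Cons.prems by simp
  show ?case
  proof (cases xs)
    case Nil then show ?thesis using ax by simp
  next
    case (Cons u v)
    have hb: "a + length v * d \<le> u" using IH Cons by simp
    have ux: "u + d \<le> x" using dx Cons by simp
    have L: "length xs * d = length v * d + d" using Cons by simp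
    have xb: "a + length xs * d \<le> x" using hb ux L by simp
    have phixs: "phi d xs = (u - length v * d) # phi d v" using Cons by simp
    have "\<forall>y\<in>set (phi d xs). y \<le> x - length xs * d"
    proof
      fix y assume "y \<in> set (phi d xs)"
      then have "y \<le> u - length v * d" using IH phixs sorted_hd_ge[of "u - length v * d" "phi d v" y] by simp
      then show "y \<le> x - length xs * d" using hb ux L by linarith
    qed
    then have s: "sorted_wrt (\<ge>) (phi d (x # xs))" using IH by simp
    have g: "\<forall>y\<in>set (phi d (x # xs)). a \<le> y" using IH xb by simp
    have "psi d (phi d (x # xs)) = x # xs" using IH xb by simp
    then show ?thesis using s g xb by simp
  qed
qed

definition Hset :: "nat \<Rightarrow> nat \<Rightarrow> nat \<Rightarrow> nat list set" where
  "Hset d a n = {xs. is_partition xs \<and> perimeter xs = n \<and> d_distinct d xs \<and> (\<forall>x\<in>set xs. a \<le> x)}"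

lemma hd_psi: "q \<noteq> [] \<Longrightarrow> hd (psi d q) = hd q + (length q - 1) * d" by (cases q) auto
lemma hd_phi: "q \<noteq> [] \<Longrightarrow> hd (phi d q) = hd q - (length q - 1) * d" by (cases q) auto

lemma h_count_Qset: assumes "1 \<le> a" shows "h_count d a n = card (Qset a d n)"
proof -
  have "bij_betw (psi d) (Qset a d n) (Hset d a n)"
  proof (rule bij_betw_byWitness[where f' = "phi d"])
    show "\<forall>q\<in>Qset a d n. phi d (psi d q) = q" by (simp add: phi_psi)
    show "\<forall>p\<in>Hset d a n. psi d (phi d p) = p" using phi_good unfolding Hset_def by blast
    show "psi d ` Qset a d n \<subseteq> Hset d a n"
    proof
      fix p assume "p \<in> psi d ` Qset a d n"
      then obtain q where q: "q \<in> Qset a d n" "p = psi d q" by auto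
      have ne: "q \<noteq> []" and s: "sorted_wrt (\<ge>) q" and g: "\<forall>x\<in>set q. a \<le> x"
        and per: "hd q + (length q - 1)*(d+1) = n" using q unfolding Qset_def by auto
      have dd: "d_distinct d p" using psi_dd[OF s] q by simp
      have gp: "\<forall>y\<in>set p. a \<le> y" using psi_ge[OF g] q by simp
      have "perimeter p = hd q + (length q - 1) * d + length q - 1"
        using q ne by (simp add: perimeter_def hd_psi)
      also have "\<dots> = n" using per ne by (cases q) (auto simp: algebra_simps)
      finally have "perimeter p = n" .
      moreover have "is_partition p" unfolding is_partition_def
        using ne q d_distinct_sorted[OF dd] gp assms by fastforce
      ultimately show "p \<in> Hset d a n" using dd gp unfolding Hset_def by blast
    qed
    show "phi d ` Hset d a n \<subseteq> Qset a d n"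
    proof
      fix q assume "q \<in> phi d ` Hset d a n"
      then obtain p where p: "p \<in> Hset d a n" "q = phi d p" by auto
      have ne: "p \<noteq> []" and dd: "d_distinct d p" and g: "\<forall>x\<in>set p. a \<le> x" and per: "perimeter p = n"
        using p unfolding Hset_def is_partition_def by auto
      have G: "sorted_wrt (\<ge>) (phi d p) \<and> (\<forall>y\<in>set (phi d p). a \<le> y) \<and> a + (length p - 1)*d \<le> hd p"
        using phi_good[OF dd g] ne by blast
      have "hd q + (length q - 1)*(d+1) = hd p - (length p - 1) * d + ((length p - 1) * d + (length p - 1))"
        using p ne by (cases p) (auto simp: hd_phi algebra_simps)
      also have "\<dots> = hd p + length p - 1" using G ne by (cases p) auto
      also have "\<dots> = n" using per by (simp add: perimeter_def)
      finally show "q \<in> Qset a d n" using G p ne unfolding Qset_def by auto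
    qed
  qed
  then have "card (Qset a d n) = card (Hset d a n)" by (rule bij_betw_same_card)
  then show ?thesis unfolding h_count_def Hset_def by simp
qed




definition fm :: "nat \<Rightarrow> nat \<Rightarrow> nat \<Rightarrow> nat \<Rightarrow> nat" where
  "fm m m1 m2 j = (if even j then m1 + (j div 2) * m else m2 + (j div 2) * m)"

lemma fm_sm: assumes "0 < m1" "m1 < m2" "m2 \<le> m" shows "strict_mono (fm m m1 m2)"
  unfolding strict_mono_Suc_iff
proof
  fix j
  show "fm m m1 m2 j < fm m m1 m2 (Suc j)"
  proof (cases "even j")
    case True
    then have "Suc j div 2 = j div 2" by presburger
    then show ?thesis using True assms by (simp add: fm_def)
  next
    case False
    then have "Suc j div 2 = Suc (j div 2)" by presburger
    then show ?thesis using False assms by (simp add: fm_def)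
  qed
qed

lemma fm_char: assumes "0 < m1" "m1 < m2" "m2 \<le> m" "0 < x"
  shows "(x mod m = m1 mod m \<or> x mod m = m2 mod m) \<longleftrightarrow> x \<in> range (fm m m1 m2)"
proof
  assume H: "x mod m = m1 mod m \<or> x mod m = m2 mod m"
  have xd: "x = x mod m + (x div m) * m" by simp
  show "x \<in> range (fm m m1 m2)"
  proof (cases "x mod m = m1 mod m")
    case True
    then have "x = m1 + (x div m) * m" using assms xd by simp
    then have "x = fm m m1 m2 (2 * (x div m))" by (simp add: fm_def)
    then show ?thesis by blast
  next
    case False
    then have M: "x mod m = m2 mod m" using H by blast
    show ?thesis
    proof (cases "m2 < m")
      case True
      then have "x = m2 + (x div m) * m" using M xd by simp
      then have "x = fm m m1 m2 (2 * (x div m) + 1)" by (simp add: fm_def)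
      then show ?thesis by blast
    next
      case False
      then have m2: "m2 = m" using assms by simp
      then have "x mod m = 0" using M by simp
      then have "x = (x div m) * m" using xd by simp
      moreover then have "x div m \<ge> 1" using assms by (cases "x div m") auto
      ultimately have "x = m2 + (x div m - 1) * m" using m2
        by (metis add.commute le_add_diff_inverse2 mult.commute mult_Suc_right plus_1_eq_Suc)
      then have "x = fm m m1 m2 (2 * (x div m - 1) + 1)" by (simp add: fm_def)
      then show ?thesis by blast
    qed
  qed
next
  assume "x \<in> range (fm m m1 m2)"
  then obtain j where "x = fm m m1 m2 j" by auto
  then show "x mod m = m1 mod m \<or> x mod m = m2 mod m" by (auto simp: fm_def)
qed

lemma fm_pos: assumes "0 < m1" "m1 < m2" shows "0 < fm m m1 m2 j"
  using assms by (simp add: fm_def)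

lemma l_count_Iset: assumes "0 < m1" "m1 < m2" "m2 \<le> m"
  shows "l_count m m1 m2 n = card (Iset (fm m m1 m2) n)"
proof -
  let ?f = "fm m m1 m2"
  let ?L = "{xs. is_partition xs \<and> perimeter xs = n
                              \<and> (\<forall>x\<in>set xs. x mod m = m1 mod m \<or> x mod m = m2 mod m)}"
  have sm: "strict_mono ?f" using fm_sm assms by simp
  have inj: "inj ?f" using sm by (rule strict_mono_imp_inj_on)
  have le: "\<And>i j. ?f i \<le> ?f j \<longleftrightarrow> i \<le> j" using sm by (simp add: strict_mono_less_eq)
  have "bij_betw (map ?f) (Iset ?f n) ?L"
  proof (rule bij_betw_byWitness[where f' = "map (inv ?f)"])
    show "\<forall>ys\<in>Iset ?f n. map (inv ?f) (map ?f ys) = ys" using inj by (simp add: map_idI inv_f_f)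
    show "\<forall>xs\<in>?L. map ?f (map (inv ?f) xs) = xs"
    proof
      fix xs assume "xs \<in> ?L"
      then have "\<forall>x\<in>set xs. x \<in> range ?f" using fm_char[OF assms] unfolding is_partition_def by blast
      then show "map ?f (map (inv ?f) xs) = xs" by (simp add: map_idI f_inv_into_f)
    qed
    show "map ?f ` Iset ?f n \<subseteq> ?L"
    proof
      fix xs assume "xs \<in> map ?f ` Iset ?f n"
      then obtain ys where ys: "ys \<in> Iset ?f n" "xs = map ?f ys" by auto
      have ne: "ys \<noteq> []" and s: "sorted_wrt (\<ge>) ys" and p: "?f (hd ys) + length ys - 1 = n"
        using ys unfolding Iset_def by auto
      have "sorted_wrt (\<ge>) xs" using s ys le by (simp add: sorted_wrt_map)
      moreover have "\<forall>x\<in>set xs. 0 < x" using ys fm_pos[OF assms(1,2)] by auto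
      moreover have "\<forall>x\<in>set xs. x mod m = m1 mod m \<or> x mod m = m2 mod m"
        using ys fm_char[OF assms] fm_pos[OF assms(1,2)] by auto
      moreover have "perimeter xs = n" using ys ne p by (simp add: perimeter_def hd_map)
      ultimately show "xs \<in> ?L" using ne ys unfolding is_partition_def by auto
    qed
    show "map (inv ?f) ` ?L \<subseteq> Iset ?f n"
    proof
      fix ys assume "ys \<in> map (inv ?f) ` ?L"
      then obtain xs where xs: "xs \<in> ?L" "ys = map (inv ?f) xs" by auto
      have ne: "xs \<noteq> []" and s: "sorted_wrt (\<ge>) xs" and per: "perimeter xs = n"
        using xs unfolding is_partition_def by auto
      have R: "\<forall>x\<in>set xs. x \<in> range ?f" using xs fm_char[OF assms] unfolding is_partition_def by blast
      have "sorted_wrt (\<ge>) ys" unfolding xs(2) sorted_wrt_map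
      proof (rule sorted_wrt_mono_rel[OF _ s])
        fix x y assume "x \<in> set xs" "y \<in> set xs" "y \<le> x"
        then show "inv ?f y \<le> inv ?f x" using R le[of "inv ?f y" "inv ?f x"] by (simp add: f_inv_into_f)
      qed
      moreover have "?f (hd ys) = hd xs" using ne R xs by (simp add: hd_map f_inv_into_f)
      ultimately show "ys \<in> Iset ?f n" using ne per xs unfolding Iset_def perimeter_def by auto
    qed
  qed
  then show ?thesis unfolding l_count_def by (simp add: bij_betw_same_card)
qed




lemma binom_lb: "1 \<le> k \<Longrightarrow> N + 1 - k \<le> N choose k"
proof (induction k arbitrary: N)
  case 0 then show ?case by simp
next
  case (Suc k)
  show ?case
  proof (cases "k = 0")
    case True then show ?thesis by simp
  next
    case False
    show ?thesis
    proof (cases N)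
      case 0 then show ?thesis by simp
    next
      case (Suc M)
      have "M + 1 - k \<le> M choose k" using Suc.IH False by simp
      also have "\<dots> \<le> Suc M choose Suc k" by (simp add: binomial_Suc_Suc)
      finally show ?thesis using Suc by simp
    qed
  qed
qed

lemma term_mono: fixes f g :: "nat \<Rightarrow> nat" assumes "f j \<le> g j"
  shows "(if g j \<le> n then (n - g j + j) choose j else 0) \<le> (if f j \<le> n then (n - f j + j) choose j else 0)"
  using assms by (auto intro: binomial_right_mono)

lemma CntF_mono: assumes "\<And>j. f j \<le> g j" shows "CntF g n \<le> CntF f n"
  unfolding CntF_def by (rule sum_mono) (rule term_mono, rule assms)

lemma CntF_strict:
  assumes "\<And>j. f j \<le> g j" "f j0 < g j0" "2 \<le> j0" "j0 < n" "g j0 \<le> n"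
  shows "CntF g n + (n - g j0) \<le> CntF f n"
proof -
  let ?Tf = "\<lambda>j. if f j \<le> n then (n - f j + j) choose j else 0"
  let ?Tg = "\<lambda>j. if g j \<le> n then (n - g j + j) choose j else 0"
  let ?D = "\<lambda>j. if j = j0 then n - g j0 else 0"
  have pt: "?Tg j + ?D j \<le> ?Tf j" for j
  proof (cases "j = j0")
    case False then show ?thesis using term_mono[of f j g n] assms(1)[of j] by simp
  next
    case True
    obtain j' where j': "j0 = Suc j'" "1 \<le> j'" using assms(3) by (cases j0) auto
    define N where "N = n - g j0 + j0"
    have fl: "f j0 \<le> n" using assms by simp
    have "Suc N \<le> n - f j0 + j0" using assms unfolding N_def by simp
    then have "Suc N choose j0 \<le> (n - f j0 + j0) choose j0" by (rule binomial_right_mono)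
    moreover have "Suc N choose j0 = (N choose j') + (N choose j0)" using j' by simp
    moreover have "N + 1 - j' \<le> N choose j'" using binom_lb j' by simp
    moreover have "n - g j0 \<le> N + 1 - j'" unfolding N_def using j' by simp
    ultimately have X: "(N choose j0) + (n - g j0) \<le> (n - f j0 + j0) choose j0" by linarith
    show ?thesis using X unfolding N_def by (simp only: True fl assms(5) if_True simp_thms)
  qed
  have "CntF g n + (n - g j0) = (\<Sum>j<n. ?Tg j + ?D j)"
    unfolding CntF_def sum.distrib using assms(4) by simp
  also have "\<dots> \<le> (\<Sum>j<n. ?Tf j)" by (rule sum_mono) (rule pt)
  finally show ?thesis unfolding CntF_def .
qed

lemma CntF_lim:
  assumes "\<And>j. f j \<le> g j" "f j0 < g j0" "2 \<le> j0"
  shows "filterlim (\<lambda>n. real (CntF f n) - real (CntF g n)) at_top sequentially"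
  unfolding filterlim_at_top
proof
  fix Z :: real
  show "\<forall>\<^sub>F n in sequentially. Z \<le> real (CntF f n) - real (CntF g n)"
    unfolding eventually_sequentially
  proof (intro exI allI impI)
    fix n assume n: "nat \<lceil>Z\<rceil> + g j0 + j0 + 1 \<le> n"
    have "CntF g n + (n - g j0) \<le> CntF f n" using CntF_strict[of f g j0 n] assms n by simp
    then have "real (n - g j0) \<le> real (CntF f n) - real (CntF g n)" by linarith
    moreover have "Z \<le> real (n - g j0)" using n by linarith
    ultimately show "Z \<le> real (CntF f n) - real (CntF g n)" by linarith
  qed
qed

lemma fm_eq: fixes d a :: nat shows "fm (2*d+2) a (a+d+1) = (\<lambda>k. a + k*(d+1))"
proof
  fix k :: nat
  have "k = 2*(k div 2) \<or> k = 2*(k div 2)+1" by presburger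
  then obtain i where "k = 2*i \<or> k = 2*i+1" by blast
  then show "fm (2*d+2) a (a+d+1) k = a + k*(d+1)"
    by (auto simp: fm_def algebra_simps)
qed



theorem mainTheorem11:
  fixes d a m1 m2 :: nat
  assumes "1 \<le> d" and "1 \<le> a" and "a \<le> d + 1"
    and "0 < m1" and "m1 < m2" and "m2 \<le> 2 * d + 2"
  shows "(a \<le> m1 \<and> a + d + 1 \<le> m2 \<and> (m1, m2) \<noteq> (a, a + d + 1) \<longrightarrow>
            filterlim (\<lambda>n. real (h_count d a n) - real (l_count (2 * d + 2) m1 m2 n)) at_top sequentially)
       \<and> (m1 \<le> a \<and> m2 \<le> a + d + 1 \<and> (m1, m2) \<noteq> (a, a + d + 1) \<longrightarrow>
            filterlim (\<lambda>n. real (h_count d a n) - real (l_count (2 * d + 2) m1 m2 n)) at_bot sequentially)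
       \<and> ((m1, m2) = (a, a + d + 1) \<longrightarrow>
            (\<forall>n. h_count d a n = l_count (2 * d + 2) m1 m2 n))"
proof -
  let ?m = "2 * d + 2"
  let ?f = "fm ?m a (a+d+1)"
  let ?g = "fm ?m m1 m2"
  have H: "h_count d a n = CntF ?f n" for n
    using h_count_Qset[OF assms(2)] card_Qset[OF assms(2)] fm_eq by simp
  have L: "l_count ?m m1 m2 n = CntF ?g n" for n
    using l_count_Iset[OF assms(4-6)] card_Iset[OF fm_sm[OF assms(4-6)]] assms(4) by (simp add: fm_def)
  have P1: "filterlim (\<lambda>n. real (h_count d a n) - real (l_count ?m m1 m2 n)) at_top sequentially"
    if A: "a \<le> m1" "a + d + 1 \<le> m2" "(m1, m2) \<noteq> (a, a + d + 1)"
  proof -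
    have le: "?f j \<le> ?g j" for j using A by (simp add: fm_def)
    have "filterlim (\<lambda>n. real (CntF ?f n) - real (CntF ?g n)) at_top sequentially"
    proof (cases "a < m1")
      case True
      then have "?f 2 < ?g 2" by (simp add: fm_def)
      then show ?thesis using CntF_lim[OF le] by simp
    next
      case False
      then have "a + d + 1 < m2" using A by auto
      then have "?f 3 < ?g 3" by (simp add: fm_def)
      then show ?thesis using CntF_lim[of ?f ?g 3] le by simp
    qed
    then show ?thesis using H L by simp
  qed
  have P2: "filterlim (\<lambda>n. real (h_count d a n) - real (l_count ?m m1 m2 n)) at_bot sequentially"
    if A: "m1 \<le> a" "m2 \<le> a + d + 1" "(m1, m2) \<noteq> (a, a + d + 1)"
  proof -
    have le: "?g j \<le> ?f j" for j using A by (simp add: fm_def)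
    have "filterlim (\<lambda>n. real (CntF ?g n) - real (CntF ?f n)) at_top sequentially"
    proof (cases "m1 < a")
      case True
      then have "?g 2 < ?f 2" by (simp add: fm_def)
      then show ?thesis using CntF_lim[OF le] by simp
    next
      case False
      then have "m2 < a + d + 1" using A by auto
      then have "?g 3 < ?f 3" by (simp add: fm_def)
      then show ?thesis using CntF_lim[of ?g ?f 3] le by simp
    qed
    then show ?thesis unfolding filterlim_uminus_at_bot using H L by simp
  qed
  have P3: "\<forall>n. h_count d a n = l_count ?m m1 m2 n" if "(m1, m2) = (a, a + d + 1)"
    using H L that by simp
  show ?thesis using P1 P2 P3 by blast
qed


end
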